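(* Let $P$ be a continuous poset, $U\subseteq P$ an up-set and $D\subseteq P$ a down-set. Then (i) $k[U]$ is lower semi-continuous iff $U$ is Scott-open; (ii) $k[D]$ is lower semi-continuous iff $D$ is Scott-closed. For $P=\mathbb R^n$ with componentwise order one also has: (iii) $k[U]$ is upper semi-continuous iff $U$ is closed in the standard topology; (iv) $k[D]$ is upper semi-continuous iff $D$ is open in the standard topology.
   Context: Let $P$ be a poset. A subset is directed if nonempty and any two elements have an upper bound in it. $x\ll y$ means: for every directed $D$ whose supremum exists with $y\le\sup D$, some $d\in D$ satisfies $x\le d$. $P$ is continuous if for each $p$ the set $\{x:x\ll p\}$ is directed with supremum $p$. A set $U$ is Scott-open if it is an up-set meeting every directed set whose supremum exists and lies in $U$; Scott-closed sets are complements of Scott-open sets. $k$ is a commutative ring with unity; persistence modules are functors from $P$ (as a category) to $k$-modules. For convex $I\subseteq P$, $k[I]$ is the indicator module: $k$ on $I$, $0$ elsewhere, identity maps within $I$, zero otherwise. $\underline M_p=\varprojlim_{x\gg p}M_x$, $\overline M_p=\varinjlim_{x\ll p}M_x$; $M$ is upper (resp. lower) semi-continuous if the canonical morphism $M\to\underline M$ (resp. $\overline M\to M$) is an isomorphism. *)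

theory Defs
  imports "HOL-Analysis.Analysis" "HOL-Algebra.Module"
begin

section \<open>Order-theoretic notions (the poset P is the whole type 'a)\<close>

definition directed :: "'a::ord set \<Rightarrow> bool" where
  "directed D \<longleftrightarrow> D \<noteq> {} \<and> (\<forall>x\<in>D. \<forall>y\<in>D. \<exists>z\<in>D. x \<le> z \<and> y \<le> z)"

definition is_sup :: "'a::ord set \<Rightarrow> 'a \<Rightarrow> bool" where
  "is_sup S s \<longleftrightarrow> (\<forall>d\<in>S. d \<le> s) \<and> (\<forall>u. (\<forall>d\<in>S. d \<le> u) \<longrightarrow> s \<le> u)"

definition way_below :: "'a::ord \<Rightarrow> 'a \<Rightarrow> bool" (infix "\<lless>" 50) where
  "x \<lless> y \<longleftrightarrow> (\<forall>D s. directed D \<and> is_sup D s \<and> y \<le> s \<longrightarrow> (\<exists>d\<in>D. x \<le> d))"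

definition continuous_poset :: "'a::ord itself \<Rightarrow> bool" where
  "continuous_poset (_::'a itself) \<longleftrightarrow>
     (\<forall>p::'a. directed {x. x \<lless> p} \<and> is_sup {x. x \<lless> p} p)"

definition up_set :: "'a::ord set \<Rightarrow> bool" where
  "up_set U \<longleftrightarrow> (\<forall>x y. x \<in> U \<and> x \<le> y \<longrightarrow> y \<in> U)"

definition down_set :: "'a::ord set \<Rightarrow> bool" where
  "down_set D \<longleftrightarrow> (\<forall>x y. y \<in> D \<and> x \<le> y \<longrightarrow> x \<in> D)"

definition scott_open :: "'a::ord set \<Rightarrow> bool" where
  "scott_open U \<longleftrightarrow> up_set U \<and>
     (\<forall>D s. directed D \<and> is_sup D s \<and> s \<in> U \<longrightarrow> D \<inter> U \<noteq> {})"

definition scott_closed :: "'a::ord set \<Rightarrow> bool" where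
  "scott_closed C \<longleftrightarrow> scott_open (- C)"

definition persistence_module ::
  "('k, 'k) ring_scheme \<Rightarrow> ('a::ord \<Rightarrow> ('k, 'm) module) \<Rightarrow> ('a \<Rightarrow> 'a \<Rightarrow> 'm \<Rightarrow> 'm) \<Rightarrow> bool" where
  "persistence_module k M F \<longleftrightarrow>
     (\<forall>x. module k (M x)) \<and>
     (\<forall>x y. x \<le> y \<longrightarrow> F x y \<in> carrier (M x) \<rightarrow> carrier (M y)) \<and>
     (\<forall>x y. x \<le> y \<longrightarrow> (\<forall>a\<in>carrier (M x). \<forall>b\<in>carrier (M x).
          F x y (a \<oplus>\<^bsub>M x\<^esub> b) = F x y a \<oplus>\<^bsub>M y\<^esub> F x y b)) \<and>
     (\<forall>x y. x \<le> y \<longrightarrow> (\<forall>r\<in>carrier k. \<forall>a\<in>carrier (M x).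
          F x y (r \<odot>\<^bsub>M x\<^esub> a) = r \<odot>\<^bsub>M y\<^esub> F x y a)) \<and>
     (\<forall>x. \<forall>a\<in>carrier (M x). F x x a = a) \<and>
     (\<forall>x y z. x \<le> y \<and> y \<le> z \<longrightarrow> (\<forall>a\<in>carrier (M x). F y z (F x y a) = F x z a))"

definition ring_module :: "('k, 'b) ring_scheme \<Rightarrow> ('k, 'k) module" where
  "ring_module k = \<lparr>carrier = carrier k, mult = mult k, one = one k, zero = zero k,
                     add = add k, smult = mult k\<rparr>"

definition zero_module :: "('k, 'b) ring_scheme \<Rightarrow> ('k, 'k) module" where
  "zero_module k = (ring_module k)\<lparr>carrier := {\<zero>\<^bsub>k\<^esub>}\<rparr>"

definition indicator_module :: "('k, 'b) ring_scheme \<Rightarrow> 'a set \<Rightarrow> 'a \<Rightarrow> ('k, 'k) module" where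
  "indicator_module k I x = (if x \<in> I then ring_module k else zero_module k)"

definition indicator_map :: "('k, 'b) ring_scheme \<Rightarrow> 'a set \<Rightarrow> 'a \<Rightarrow> 'a \<Rightarrow> 'k \<Rightarrow> 'k" where
  "indicator_map k I x y = (if x \<in> I \<and> y \<in> I then (\<lambda>m. m) else (\<lambda>m. \<zero>\<^bsub>k\<^esub>))"

text \<open>Underlying set of the inverse limit lim_{x \<gg> p} M_x (compatible families,
  normalised to undefined off the index set) and the canonical map M_p \<rightarrow> lim.\<close>
definition upper_lim :: "('a::ord \<Rightarrow> ('k, 'm) module) \<Rightarrow> ('a \<Rightarrow> 'a \<Rightarrow> 'm \<Rightarrow> 'm) \<Rightarrow> 'a \<Rightarrow> ('a \<Rightarrow> 'm) set" where
  "upper_lim M F p = {s. (\<forall>x. p \<lless> x \<longrightarrow> s x \<in> carrier (M x)) \<and>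
                         (\<forall>x. \<not> p \<lless> x \<longrightarrow> s x = undefined) \<and>
                         (\<forall>x y. p \<lless> x \<and> p \<lless> y \<and> x \<le> y \<longrightarrow> F x y (s x) = s y)}"

definition upper_canon :: "('a::ord \<Rightarrow> 'a \<Rightarrow> 'm \<Rightarrow> 'm) \<Rightarrow> 'a \<Rightarrow> 'm \<Rightarrow> ('a \<Rightarrow> 'm)" where
  "upper_canon F p m = (\<lambda>x. if p \<lless> x then F p x m else undefined)"

definition upper_semicontinuous ::
  "('a::ord \<Rightarrow> ('k, 'm) module) \<Rightarrow> ('a \<Rightarrow> 'a \<Rightarrow> 'm \<Rightarrow> 'm) \<Rightarrow> bool" where
  "upper_semicontinuous M F \<longleftrightarrow>
     (\<forall>p. bij_betw (upper_canon F p) (carrier (M p)) (upper_lim M F p))"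

text \<open>Underlying set of the (directed) colimit colim_{x \<lless> p} M_x: pairs (x,m) modulo
  (x,m) ~ (y,n) iff they become equal at some common upper bound z \<lless> p;
  and the canonical map colim \<rightarrow> M_p, [(x,m)] \<mapsto> F x p m.\<close>
definition lower_pairs :: "('a::ord \<Rightarrow> ('k, 'm) module) \<Rightarrow> 'a \<Rightarrow> ('a \<times> 'm) set" where
  "lower_pairs M p = {(x, m). x \<lless> p \<and> m \<in> carrier (M x)}"

definition lower_rel :: "('a::ord \<Rightarrow> ('k, 'm) module) \<Rightarrow> ('a \<Rightarrow> 'a \<Rightarrow> 'm \<Rightarrow> 'm) \<Rightarrow> 'a \<Rightarrow> (('a \<times> 'm) \<times> ('a \<times> 'm)) set" where
  "lower_rel M F p = {((x, m), (y, n)). (x, m) \<in> lower_pairs M p \<and> (y, n) \<in> lower_pairs M p \<and>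
      (\<exists>z. z \<lless> p \<and> x \<le> z \<and> y \<le> z \<and> F x z m = F y z n)}"

definition lower_colim :: "('a::ord \<Rightarrow> ('k, 'm) module) \<Rightarrow> ('a \<Rightarrow> 'a \<Rightarrow> 'm \<Rightarrow> 'm) \<Rightarrow> 'a \<Rightarrow> ('a \<times> 'm) set set" where
  "lower_colim M F p = lower_pairs M p // lower_rel M F p"

definition lower_canon :: "('a::ord \<Rightarrow> 'a \<Rightarrow> 'm \<Rightarrow> 'm) \<Rightarrow> 'a \<Rightarrow> ('a \<times> 'm) set \<Rightarrow> 'm" where
  "lower_canon F p C = the_elem ((\<lambda>(x, m). F x p m) ` C)"

definition lower_semicontinuous ::
  "('a::ord \<Rightarrow> ('k, 'm) module) \<Rightarrow> ('a \<Rightarrow> 'a \<Rightarrow> 'm \<Rightarrow> 'm) \<Rightarrow> bool" where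
  "lower_semicontinuous M F \<longleftrightarrow>
     (\<forall>p. bij_betw (lower_canon F p) (lower_colim M F p) (carrier (M p)))"

end

theory Submission
  imports Defs
begin


lemma quot_bij:
  assumes R: "R = {(a,b). a\<in>A \<and> b\<in>A \<and> f a = f b}"
    and G: "\<And>a. a\<in>A \<Longrightarrow> G a = h (f a)"
  shows "bij_betw (\<lambda>C. the_elem (G ` C)) (A//R) B \<longleftrightarrow> bij_betw h (f`A) B"
proof -
  have cls: "R``{a} = {b\<in>A. f b = f a}" if "a\<in>A" for a using that R by auto
  define \<phi> where "\<phi> C = the_elem (f ` C)" for C
  have phi: "\<phi> (R``{a}) = f a" if "a\<in>A" for a
  proof -
    have "f ` (R``{a}) = {f a}" using cls[OF that] that by auto
    thus ?thesis by (simp add: \<phi>_def)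
  qed
  have g: "the_elem (G ` (R``{a})) = h (f a)" if "a\<in>A" for a
  proof -
    have "G ` (R``{a}) = {h (f a)}" using cls[OF that] that G by auto
    thus ?thesis by simp
  qed
  have b1: "bij_betw \<phi> (A//R) (f`A)"
  proof (rule bij_betw_imageI)
    show "inj_on \<phi> (A // R)"
    proof (rule inj_onI)
      fix C D assume "C \<in> A//R" "D \<in> A//R" "\<phi> C = \<phi> D"
      then obtain a b where "a\<in>A" "b\<in>A" "C = R``{a}" "D = R``{b}" "f a = f b"
        by (auto simp: quotient_def phi)
      thus "C = D" using cls by auto
    qed
    show "\<phi> ` (A // R) = f ` A"
    proof
      show "\<phi> ` (A // R) \<subseteq> f ` A" by (auto simp: quotient_def phi)
      show "f ` A \<subseteq> \<phi> ` (A // R)"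
      proof
        fix y assume "y \<in> f ` A"
        then obtain a where a: "a \<in> A" "y = f a" by auto
        hence "R``{a} \<in> A//R" by (auto simp: quotient_def)
        thus "y \<in> \<phi> ` (A // R)" using a phi by force
      qed
    qed
  qed
  have "bij_betw (\<lambda>C. the_elem (G ` C)) (A//R) B \<longleftrightarrow> bij_betw (h \<circ> \<phi>) (A//R) B"
  proof (rule bij_betw_cong)
    fix C assume "C \<in> A//R"
    then obtain a where "a\<in>A" "C = R``{a}" by (auto simp: quotient_def)
    thus "the_elem (G ` C) = (h \<circ> \<phi>) C" by (simp add: phi g)
  qed
  also have "\<dots> \<longleftrightarrow> bij_betw h (f`A) B" using bij_betw_comp_iff[OF b1, of h B] by simp
  finally show ?thesis .
qed

lemma wb_le:
  fixes x p :: "'a::order"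
  assumes "x \<lless> p" shows "x \<le> p"
proof -
  have "directed {p}" "is_sup {p} p" by (auto simp: directed_def is_sup_def)
  thus ?thesis using assms unfolding way_below_def by auto
qed

lemma dir_ub:
  assumes "directed W" "x\<in>W" "y\<in>W" shows "\<exists>z\<in>W. x \<le> z \<and> y \<le> z"
  using assms by (auto simp: directed_def)

lemma car_ind: "carrier (indicator_module k I x) = (if x \<in> I then carrier k else {\<zero>\<^bsub>k\<^esub>})"
  by (simp add: indicator_module_def ring_module_def zero_module_def)

lemma map_ind: "indicator_map k I x y m = (if x\<in>I \<and> y\<in>I then m else \<zero>\<^bsub>k\<^esub>)"
  by (simp add: indicator_map_def)

lemma lower_canon_eq: "lower_canon F p = (\<lambda>C. the_elem ((\<lambda>(x,m). F x p m) ` C))"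
  by (simp add: lower_canon_def fun_eq_iff)

lemma mem_lower_pairs: "(x,m) \<in> lower_pairs M p \<longleftrightarrow> x \<lless> p \<and> m \<in> carrier (M x)"
  by (simp add: lower_pairs_def)

lemma cring_simps:
  assumes "cring k" shows "\<zero>\<^bsub>k\<^esub> \<in> carrier k" "\<one>\<^bsub>k\<^esub> \<in> carrier k"
proof -
  interpret cring k by (rule assms)
  show "\<zero>\<^bsub>k\<^esub> \<in> carrier k" "\<one>\<^bsub>k\<^esub> \<in> carrier k" by simp_all
qed

abbreviation "LSC k I p \<equiv> bij_betw (lower_canon (indicator_map k I) p)
   (lower_colim (indicator_module k I) (indicator_map k I) p) (carrier (indicator_module k I p))"

lemma L_allout:
  fixes p :: "'a::order" and k :: "'k ring"
  assumes k: "cring k" "\<one>\<^bsub>k\<^esub> \<noteq> \<zero>\<^bsub>k\<^esub>" and dir: "directed {x. x \<lless> p}"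
    and out: "\<forall>x. x\<lless>p \<longrightarrow> x\<notin>I"
  shows "LSC k I p \<longleftrightarrow> p \<notin> I"
proof -
  let ?M = "indicator_module k I" and ?F = "indicator_map k I"
  let ?A = "lower_pairs ?M p"
  have R: "lower_rel ?M ?F p = {(a,b). a\<in>?A \<and> b\<in>?A \<and> (\<lambda>_. \<zero>\<^bsub>k\<^esub>) a = (\<lambda>_. \<zero>\<^bsub>k\<^esub>) b}"
  proof (intro Set.set_eqI iffI)
    fix ab assume "ab \<in> {(a,b). a\<in>?A \<and> b\<in>?A \<and> (\<lambda>_. \<zero>\<^bsub>k\<^esub>) a = (\<lambda>_. \<zero>\<^bsub>k\<^esub>) b}"
    then obtain x m y n where ab: "ab = ((x,m),(y,n))" "(x,m)\<in>?A" "(y,n)\<in>?A" by auto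
    hence "x \<lless> p" "y \<lless> p" by (auto simp: mem_lower_pairs)
    then obtain z where "z \<lless> p" "x \<le> z" "y \<le> z" using dir by (auto simp: directed_def)
    moreover have "?F x z m = ?F y z n" using out \<open>x \<lless> p\<close> \<open>y \<lless> p\<close> by (simp add: map_ind)
    ultimately show "ab \<in> lower_rel ?M ?F p" using ab unfolding lower_rel_def by blast
  qed (auto simp: lower_rel_def)
  have G: "(\<lambda>(x,m). ?F x p m) a = id ((\<lambda>_. \<zero>\<^bsub>k\<^esub>) a)" if "a \<in> ?A" for a
    using that out by (auto simp: mem_lower_pairs lower_pairs_def map_ind)
  have "LSC k I p \<longleftrightarrow> bij_betw id ((\<lambda>_. \<zero>\<^bsub>k\<^esub>) ` ?A) (carrier (?M p))"
    unfolding lower_canon_eq lower_colim_def by (rule quot_bij[where f="\<lambda>_. \<zero>\<^bsub>k\<^esub>" and h=id, OF R G])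
  moreover obtain x0 where "x0 \<lless> p" using dir by (auto simp: directed_def)
  hence "(x0, \<zero>\<^bsub>k\<^esub>) \<in> ?A" using out by (simp add: mem_lower_pairs car_ind)
  hence "(\<lambda>_. \<zero>\<^bsub>k\<^esub>) ` ?A = {\<zero>\<^bsub>k\<^esub>}" by auto
  moreover have "bij_betw id {\<zero>\<^bsub>k\<^esub>} (carrier (?M p)) \<longleftrightarrow> p \<notin> I"
    using cring_simps[OF k(1)] k(2) by (auto simp: car_ind bij_betw_def)
  ultimately show ?thesis by simp
qed

lemma L_allin:
  fixes p :: "'a::order" and k :: "'k ring"
  assumes k: "cring k" "\<one>\<^bsub>k\<^esub> \<noteq> \<zero>\<^bsub>k\<^esub>" and dir: "directed {x. x \<lless> p}"
    and inn: "\<forall>x. x\<lless>p \<longrightarrow> x\<in>I"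
  shows "LSC k I p \<longleftrightarrow> p \<in> I"
proof -
  let ?M = "indicator_module k I" and ?F = "indicator_map k I"
  let ?A = "lower_pairs ?M p"
  have R: "lower_rel ?M ?F p = {(a,b). a\<in>?A \<and> b\<in>?A \<and> snd a = snd b}"
  proof (intro Set.set_eqI iffI)
    fix ab assume "ab \<in> {(a,b). a\<in>?A \<and> b\<in>?A \<and> snd a = snd b}"
    then obtain x m y n where ab: "ab = ((x,m),(y,n))" "(x,m)\<in>?A" "(y,n)\<in>?A" "m = n" by auto
    hence "x \<lless> p" "y \<lless> p" by (auto simp: mem_lower_pairs)
    then obtain z where "z \<lless> p" "x \<le> z" "y \<le> z" using dir by (auto simp: directed_def)
    moreover have "?F x z m = ?F y z n" using inn \<open>x \<lless> p\<close> \<open>y \<lless> p\<close> \<open>z \<lless> p\<close> ab(4)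
      by (simp add: map_ind)
    ultimately show "ab \<in> lower_rel ?M ?F p" using ab unfolding lower_rel_def by blast
  next
    fix ab assume "ab \<in> lower_rel ?M ?F p"
    then obtain x m y n z where ab: "ab = ((x,m),(y,n))" "(x,m)\<in>?A" "(y,n)\<in>?A"
      "z \<lless> p" "?F x z m = ?F y z n"
      unfolding lower_rel_def by blast
    hence "m = n" using inn by (auto simp: mem_lower_pairs map_ind)
    thus "ab \<in> {(a,b). a\<in>?A \<and> b\<in>?A \<and> snd a = snd b}" using ab by auto
  qed
  let ?h = "\<lambda>m. if p \<in> I then m else \<zero>\<^bsub>k\<^esub>"
  have G: "(\<lambda>(x,m). ?F x p m) a = ?h (snd a)" if "a \<in> ?A" for a
    using that inn by (auto simp: mem_lower_pairs lower_pairs_def map_ind)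
  have e1: "LSC k I p \<longleftrightarrow> bij_betw ?h (snd ` ?A) (carrier (?M p))"
    unfolding lower_canon_eq lower_colim_def by (rule quot_bij[where f=snd and h="?h", OF R G])
  obtain x0 where "x0 \<lless> p" using dir by (auto simp: directed_def)
  have e2: "snd ` ?A = carrier k"
  proof
    show "snd ` ?A \<subseteq> carrier k"
    proof
      fix y assume "y \<in> snd ` ?A"
      then obtain x where "(x,y) \<in> ?A" by force
      hence "x \<lless> p" "y \<in> carrier (?M x)" by (auto simp: mem_lower_pairs)
      thus "y \<in> carrier k" using inn by (simp add: car_ind)
    qed
    show "carrier k \<subseteq> snd ` ?A"
    proof
      fix m assume "m \<in> carrier k"
      hence "(x0, m) \<in> ?A" using inn \<open>x0 \<lless> p\<close> by (simp add: mem_lower_pairs car_ind)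
      thus "m \<in> snd ` ?A" by force
    qed
  qed
  have e3: "bij_betw ?h (carrier k) (carrier (?M p)) \<longleftrightarrow> p \<in> I"
  proof (cases "p \<in> I")
    case True thus ?thesis by (simp add: car_ind bij_betw_def)
  next
    case False
    have "?h \<one>\<^bsub>k\<^esub> = ?h \<zero>\<^bsub>k\<^esub>" using False by simp
    have "\<not> inj_on ?h (carrier k)"
    proof
      assume "inj_on ?h (carrier k)"
      from inj_onD[OF this \<open>?h \<one>\<^bsub>k\<^esub> = ?h \<zero>\<^bsub>k\<^esub>\<close>] cring_simps[OF k(1)] k(2)
      show False by blast
    qed
    thus ?thesis using False by (auto simp: bij_betw_def)
  qed
  show ?thesis by (simp only: e1 e2 e3)
qed

lemma dir3:
  fixes p :: "'a::order"
  assumes dir: "directed {x. x \<lless> p}" "x \<lless> p" "y \<lless> p" "u \<lless> p"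
  obtains z where "z \<lless> p" "x \<le> z" "y \<le> z" "u \<le> z"
proof -
  obtain z1 where "z1 \<lless> p" "x \<le> z1" "y \<le> z1" using dir by (auto simp: directed_def)
  then obtain z where "z \<lless> p" "z1 \<le> z" "u \<le> z" using dir by (auto simp: directed_def)
  thus ?thesis using that \<open>x \<le> z1\<close> \<open>y \<le> z1\<close> order_trans by blast
qed

lemma L_somein_up:
  fixes p :: "'a::order" and k :: "'k ring"
  assumes k: "cring k" and dir: "directed {x. x \<lless> p}"
    and up: "up_set I" and pI: "p \<in> I" and u: "u \<lless> p" "u \<in> I"
  shows "LSC k I p"
proof -
  let ?M = "indicator_module k I" and ?F = "indicator_map k I"
  let ?A = "lower_pairs ?M p"
  let ?f = "\<lambda>(x,m). if x \<in> I then m else \<zero>\<^bsub>k\<^esub>"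
  have R: "lower_rel ?M ?F p = {(a,b). a\<in>?A \<and> b\<in>?A \<and> ?f a = ?f b}"
  proof (intro Set.set_eqI iffI)
    fix ab assume "ab \<in> {(a,b). a\<in>?A \<and> b\<in>?A \<and> ?f a = ?f b}"
    then obtain x m y n where ab: "ab = ((x,m),(y,n))" "(x,m)\<in>?A" "(y,n)\<in>?A"
       "?f (x,m) = ?f (y,n)" by auto
    hence "x \<lless> p" "y \<lless> p" by (auto simp: mem_lower_pairs)
    then obtain z where z: "z \<lless> p" "x \<le> z" "y \<le> z" "u \<le> z" using dir3[OF dir _ _ u(1)] by blast
    have "z \<in> I" using up u(2) z(4) by (auto simp: up_set_def)
    hence "?F x z m = ?F y z n" using ab(4) by (simp add: map_ind)
    thus "ab \<in> lower_rel ?M ?F p" using ab z unfolding lower_rel_def by blast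
  next
    fix ab assume "ab \<in> lower_rel ?M ?F p"
    then obtain x m y n z where ab: "ab = ((x,m),(y,n))" "(x,m)\<in>?A" "(y,n)\<in>?A"
      "z \<lless> p" "x \<le> z" "y \<le> z" "?F x z m = ?F y z n"
      unfolding lower_rel_def by blast
    have "?f (x,m) = ?f (y,n)"
    proof (cases "z \<in> I")
      case True thus ?thesis using ab(7) by (simp add: map_ind)
    next
      case False
      hence "x \<notin> I" "y \<notin> I" using up ab(5,6) by (auto simp: up_set_def)
      thus ?thesis by simp
    qed
    thus "ab \<in> {(a,b). a\<in>?A \<and> b\<in>?A \<and> ?f a = ?f b}" using ab by auto
  qed
  have G: "(\<lambda>(x,m). ?F x p m) a = id (?f a)" if "a \<in> ?A" for a
    using pI by (cases a) (simp add: map_ind)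
  have e1: "LSC k I p \<longleftrightarrow> bij_betw id (?f ` ?A) (carrier (?M p))"
    unfolding lower_canon_eq lower_colim_def by (rule quot_bij[where f="?f" and h=id, OF R G])
  have e2: "?f ` ?A = carrier k"
  proof
    show "?f ` ?A \<subseteq> carrier k"
    proof
      fix y assume "y \<in> ?f ` ?A"
      then obtain x m where "(x,m) \<in> ?A" "y = ?f (x,m)" by force
      thus "y \<in> carrier k" using cring_simps[OF k] by (auto simp: mem_lower_pairs car_ind)
    qed
    show "carrier k \<subseteq> ?f ` ?A"
    proof
      fix m assume "m \<in> carrier k"
      hence "(u, m) \<in> ?A" using u by (simp add: mem_lower_pairs car_ind)
      moreover have "?f (u,m) = m" using u by simp
      ultimately show "m \<in> ?f ` ?A" by force
    qed
  qed
  have e3: "bij_betw id (carrier k) (carrier (?M p))" using pI by (simp add: car_ind bij_betw_def)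
  show ?thesis using e1 e2 e3 by simp
qed

lemma L_someout_down:
  fixes p :: "'a::order" and k :: "'k ring"
  assumes k: "cring k" and dir: "directed {x. x \<lless> p}"
    and down: "down_set I" and pI: "p \<notin> I" and u: "u \<lless> p" "u \<notin> I"
  shows "LSC k I p"
proof -
  let ?M = "indicator_module k I" and ?F = "indicator_map k I"
  let ?A = "lower_pairs ?M p"
  let ?f = "\<lambda>_::('a \<times> 'k). \<zero>\<^bsub>k\<^esub>"
  have R: "lower_rel ?M ?F p = {(a,b). a\<in>?A \<and> b\<in>?A \<and> ?f a = ?f b}"
  proof (intro Set.set_eqI iffI)
    fix ab assume "ab \<in> {(a,b). a\<in>?A \<and> b\<in>?A \<and> ?f a = ?f b}"
    then obtain x m y n where ab: "ab = ((x,m),(y,n))" "(x,m)\<in>?A" "(y,n)\<in>?A" by auto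
    hence "x \<lless> p" "y \<lless> p" by (auto simp: mem_lower_pairs)
    then obtain z where z: "z \<lless> p" "x \<le> z" "y \<le> z" "u \<le> z" using dir3[OF dir _ _ u(1)] by blast
    have "z \<notin> I" using down u(2) z(4) by (auto simp: down_set_def)
    hence "?F x z m = ?F y z n" by (simp add: map_ind)
    thus "ab \<in> lower_rel ?M ?F p" using ab z unfolding lower_rel_def by blast
  qed (auto simp: lower_rel_def)
  have G: "(\<lambda>(x,m). ?F x p m) a = id (?f a)" if "a \<in> ?A" for a
    using pI by (cases a) (simp add: map_ind)
  have e1: "LSC k I p \<longleftrightarrow> bij_betw id (?f ` ?A) (carrier (?M p))"
    unfolding lower_canon_eq lower_colim_def by (rule quot_bij[where f="?f" and h=id, OF R G])
  have "(u, \<zero>\<^bsub>k\<^esub>) \<in> ?A" using u by (simp add: mem_lower_pairs car_ind)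
  hence e2: "?f ` ?A = {\<zero>\<^bsub>k\<^esub>}" by auto
  have e3: "bij_betw id {\<zero>\<^bsub>k\<^esub>} (carrier (?M p))" using pI by (simp add: car_ind bij_betw_def)
  show ?thesis using e1 e2 e3 by simp
qed

lemma cont_dir:
  assumes "continuous_poset TYPE('a::order)"
  shows "directed {x. x \<lless> (p::'a)}" "is_sup {x. x \<lless> (p::'a)} p"
  using assms unfolding continuous_poset_def by auto

lemma scott_char:
  fixes U :: "'a::order set"
  assumes c: "continuous_poset TYPE('a)" and up: "up_set U"
  shows "scott_open U \<longleftrightarrow> (\<forall>p\<in>U. \<exists>u. u \<lless> p \<and> u \<in> U)"
proof
  assume so: "scott_open U"
  show "\<forall>p\<in>U. \<exists>u. u \<lless> p \<and> u \<in> U"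
  proof
    fix p assume "p \<in> U"
    hence "{x. x \<lless> p} \<inter> U \<noteq> {}" using so cont_dir[OF c, of p] unfolding scott_open_def by blast
    thus "\<exists>u. u \<lless> p \<and> u \<in> U" by blast
  qed
next
  assume H: "\<forall>p\<in>U. \<exists>u. u \<lless> p \<and> u \<in> U"
  have "D \<inter> U \<noteq> {}" if DS: "directed D" "is_sup D s" "s \<in> U" for D s
  proof -
    obtain u where "u \<lless> s" "u \<in> U" using H DS(3) by blast
    then obtain d where "d \<in> D" "u \<le> d" using DS unfolding way_below_def by blast
    hence "d \<in> U" using up \<open>u \<in> U\<close> by (auto simp: up_set_def)
    thus ?thesis using \<open>d \<in> D\<close> by blast
  qed
  thus "scott_open U" using up unfolding scott_open_def by blast
qed

lemma lower_up:
  fixes U :: "'a::order set" and k :: "'k ring"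
  assumes k: "cring k" "\<one>\<^bsub>k\<^esub> \<noteq> \<zero>\<^bsub>k\<^esub>" and c: "continuous_poset TYPE('a)" and up: "up_set U"
  shows "lower_semicontinuous (indicator_module k U) (indicator_map k U) \<longleftrightarrow> scott_open U"
proof -
  have "LSC k U p \<longleftrightarrow> (p \<in> U \<longrightarrow> (\<exists>u. u \<lless> p \<and> u \<in> U))" for p
  proof (cases "\<exists>u. u \<lless> p \<and> u \<in> U")
    case True
    then obtain u where "u \<lless> p" "u \<in> U" by blast
    show ?thesis
    proof (cases "p \<in> U")
      case True thus ?thesis using L_somein_up[OF k(1) cont_dir(1)[OF c] up True \<open>u \<lless> p\<close> \<open>u \<in> U\<close>]
        \<open>u \<lless> p\<close> \<open>u \<in> U\<close> by blast
    next
      case False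
      hence "\<forall>x. x \<lless> p \<longrightarrow> x \<notin> U" using up wb_le by (auto simp: up_set_def)
      thus ?thesis using L_allout[OF k cont_dir(1)[OF c]] False by blast
    qed
  next
    case False
    thus ?thesis using L_allout[OF k cont_dir(1)[OF c]] by blast
  qed
  thus ?thesis unfolding lower_semicontinuous_def scott_char[OF c up] by blast
qed

lemma lower_down:
  fixes D :: "'a::order set" and k :: "'k ring"
  assumes k: "cring k" "\<one>\<^bsub>k\<^esub> \<noteq> \<zero>\<^bsub>k\<^esub>" and c: "continuous_poset TYPE('a)" and down: "down_set D"
  shows "lower_semicontinuous (indicator_module k D) (indicator_map k D) \<longleftrightarrow> scott_closed D"
proof -
  have up: "up_set (-D)" using down by (auto simp: up_set_def down_set_def)
  have "LSC k D p \<longleftrightarrow> (p \<in> -D \<longrightarrow> (\<exists>u. u \<lless> p \<and> u \<in> -D))" for p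
  proof (cases "p \<in> D")
    case True
    hence "\<forall>x. x \<lless> p \<longrightarrow> x \<in> D" using down wb_le by (auto simp: down_set_def)
    thus ?thesis using L_allin[OF k cont_dir(1)[OF c]] True by blast
  next
    case False
    show ?thesis
    proof (cases "\<exists>u. u \<lless> p \<and> u \<in> -D")
      case True
      then obtain u where "u \<lless> p" "u \<notin> D" by blast
      thus ?thesis using L_someout_down[OF k(1) cont_dir(1)[OF c] down False] by blast
    next
      case F2: False
      hence "\<forall>x. x \<lless> p \<longrightarrow> x \<in> D" by blast
      thus ?thesis using L_allin[OF k cont_dir(1)[OF c]] False F2 by blast
    qed
  qed
  thus ?thesis unfolding lower_semicontinuous_def scott_closed_def scott_char[OF c up] by blast
qed



lemma dir_fin:
  fixes D :: "'a::order set"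
  assumes "directed D" "finite F" "F \<subseteq> D"
  shows "\<exists>d\<in>D. \<forall>f\<in>F. f \<le> d"
  using assms(2,3)
proof (induction F rule: finite_induct)
  case empty thus ?case using assms(1) by (auto simp: directed_def)
next
  case (insert a F)
  then obtain d where "d \<in> D" "\<forall>f\<in>F. f \<le> d" by auto
  moreover have "a \<in> D" using insert.prems by auto
  moreover obtain z where "z \<in> D" "a \<le> z" "d \<le> z"
    using assms(1) \<open>a \<in> D\<close> \<open>d\<in>D\<close> unfolding directed_def by blast
  ultimately show ?case by (intro bexI[of _ z]) (auto intro: order_trans)
qed

lemma wb_vec: "((x::real^'n) \<lless> y) \<longleftrightarrow> (\<forall>i. x$i < y$i)"
proof
  assume lt: "\<forall>i. x$i < y$i"
  show "x \<lless> y" unfolding way_below_def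
  proof (intro allI impI)
    fix D s assume H: "directed D \<and> is_sup D s \<and> y \<le> s"
    have "\<exists>d\<in>D. x$i < d$i" for i
    proof (rule ccontr)
      assume "\<not> (\<exists>d\<in>D. x$i < d$i)"
      hence le: "\<forall>d\<in>D. d$i \<le> x$i" by auto
      define u :: "real^'n" where "u = (\<chi> j. if j = i then x$i else s$j)"
      have "\<forall>d\<in>D. d \<le> u"
      proof
        fix d assume "d \<in> D"
        hence "d \<le> s" using H by (auto simp: is_sup_def)
        thus "d \<le> u" using le \<open>d\<in>D\<close> by (auto simp: u_def less_eq_vec_def)
      qed
      hence "s \<le> u" using H by (auto simp: is_sup_def)
      hence "s$i \<le> u$i" by (simp add: less_eq_vec_def)
      hence "s$i \<le> x$i" by (simp add: u_def)
      moreover have "y$i \<le> s$i" using H by (auto simp: less_eq_vec_def)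
      ultimately show False using lt by (meson not_le order_trans)
    qed
    then obtain g where g: "\<forall>i. g i \<in> D \<and> x$i < g i $ i" by metis
    then obtain d where "d \<in> D" "\<forall>f\<in>range g. f \<le> d"
      using dir_fin[of D "range g"] H by auto
    have "x \<le> d" unfolding less_eq_vec_def
    proof
      fix i
      have "x$i < g i $ i" "g i \<le> d" using g \<open>\<forall>f\<in>range g. f \<le> d\<close> by auto
      thus "x$i \<le> d$i" by (auto simp: less_eq_vec_def dest: spec[of _ i])
    qed
    thus "\<exists>d\<in>D. x \<le> d" using \<open>d\<in>D\<close> by blast
  qed
next
  assume wb: "x \<lless> y"
  define D where "D = {z::real^'n. \<forall>i. z$i < y$i}"
  have "directed D" unfolding directed_def
  proof
    have "(\<chi> i. y$i - 1) \<in> D" by (simp add: D_def)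
    thus "D \<noteq> {}" by blast
    show "\<forall>a\<in>D. \<forall>b\<in>D. \<exists>z\<in>D. a \<le> z \<and> b \<le> z"
    proof (intro ballI)
      fix a b assume "a \<in> D" "b \<in> D"
      hence "(\<chi> i. max (a$i) (b$i)) \<in> D" by (simp add: D_def)
      moreover have "a \<le> (\<chi> i. max (a$i) (b$i))" "b \<le> (\<chi> i. max (a$i) (b$i))"
        by (simp_all add: less_eq_vec_def)
      ultimately show "\<exists>z\<in>D. a \<le> z \<and> b \<le> z" by blast
    qed
  qed
  moreover have "is_sup D y" unfolding is_sup_def
  proof
    show "\<forall>d\<in>D. d \<le> y" by (auto simp: D_def less_eq_vec_def less_imp_le)
    show "\<forall>u. (\<forall>d\<in>D. d \<le> u) \<longrightarrow> y \<le> u"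
    proof (intro allI impI)
      fix u assume ub: "\<forall>d\<in>D. d \<le> u"
      show "y \<le> u" unfolding less_eq_vec_def
      proof (rule allI, rule ccontr)
        fix i assume "\<not> y$i \<le> u$i"
        define z :: "real^'n" where "z = (\<chi> j. if j = i then (u$i + y$i)/2 else y$j - 1)"
        have "z \<in> D" using \<open>\<not> y$i \<le> u$i\<close> by (simp add: D_def z_def)
        hence "z$i \<le> u$i" using ub by (auto simp: less_eq_vec_def)
        thus False using \<open>\<not> y$i \<le> u$i\<close> by (simp add: z_def)
      qed
    qed
  qed
  ultimately obtain d where "d \<in> D" "x \<le> d" using wb unfolding way_below_def by blast
  thus "\<forall>i. x$i < y$i" by (auto simp: D_def less_eq_vec_def intro: le_less_trans)
qed

lemma open_char:
  fixes S :: "(real^'n) set"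
  assumes down: "down_set S"
  shows "open S \<longleftrightarrow> (\<forall>p\<in>S. \<exists>x. p \<lless> x \<and> x \<in> S)"
proof
  assume "open S"
  show "\<forall>p\<in>S. \<exists>x. p \<lless> x \<and> x \<in> S"
  proof
    fix p assume "p \<in> S"
    then obtain e where e: "e > 0" "ball p e \<subseteq> S" using \<open>open S\<close> open_contains_ball by blast
    define t where "t = e / (2 * real CARD('n))"
    have t: "t > 0" using e by (simp add: t_def)
    define x :: "real^'n" where "x = (\<chi> i. p$i + t)"
    have "norm (x - p) \<le> (\<Sum>i\<in>UNIV. \<bar>(x - p)$i\<bar>)" by (rule norm_le_l1_cart)
    also have "\<dots> = real CARD('n) * t" using t by (simp add: x_def)
    also have "\<dots> = e/2" by (simp add: t_def)
    finally have "dist p x < e" using e by (simp add: dist_norm norm_minus_commute)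
    hence "x \<in> S" using e by auto
    moreover have "p \<lless> x" using t by (simp add: wb_vec x_def)
    ultimately show "\<exists>x. p \<lless> x \<and> x \<in> S" by blast
  qed
next
  assume H: "\<forall>p\<in>S. \<exists>x. p \<lless> x \<and> x \<in> S"
  show "open S"
  proof (rule open_subopen[THEN iffD2], rule ballI)
    fix p assume "p \<in> S"
    then obtain x where "p \<lless> x" "x \<in> S" using H by blast
    define T where "T = (\<Inter>i\<in>UNIV. {y::real^'n. y$i < x$i})"
    have "open T" unfolding T_def by (intro open_INT) (auto simp: open_halfspace_component_lt_cart)
    moreover have "p \<in> T" using \<open>p \<lless> x\<close> by (simp add: T_def wb_vec)
    moreover have "T \<subseteq> S"
    proof
      fix y assume "y \<in> T"
      hence "y \<le> x" by (auto simp: T_def less_eq_vec_def less_imp_le)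
      thus "y \<in> S" using down \<open>x \<in> S\<close> by (auto simp: down_set_def)
    qed
    ultimately show "\<exists>T. open T \<and> p \<in> T \<and> T \<subseteq> S" by blast
  qed
qed



abbreviation "USC k I p \<equiv> bij_betw (upper_canon (indicator_map k I) p)
   (carrier (indicator_module k I p)) (upper_lim (indicator_module k I) (indicator_map k I) p)"

definition vmin :: "real^'n \<Rightarrow> real^'n \<Rightarrow> real^'n" where "vmin x y = (\<chi> i. min (x$i) (y$i))"
definition vmax :: "real^'n \<Rightarrow> real^'n \<Rightarrow> real^'n" where "vmax x y = (\<chi> i. max (x$i) (y$i))"
definition up1 :: "real^'n \<Rightarrow> real^'n" where "up1 p = (\<chi> i. p$i + 1)"

lemma up1: "p \<lless> up1 p" by (simp add: wb_vec up1_def)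
lemma vmin: "p \<lless> x \<Longrightarrow> p \<lless> y \<Longrightarrow> p \<lless> vmin x y" "vmin x y \<le> x" "vmin x y \<le> y"
  by (auto simp: wb_vec vmin_def less_eq_vec_def)
lemma vmax: "p \<lless> x \<Longrightarrow> p \<lless> y \<Longrightarrow> p \<lless> vmax x y" "x \<le> vmax x y" "y \<le> vmax x y"
  by (auto simp: wb_vec vmax_def less_eq_vec_def less_max_iff_disj)

lemma mem_upper_lim: "s \<in> upper_lim M F p \<longleftrightarrow> (\<forall>x. p\<lless>x \<longrightarrow> s x \<in> carrier (M x)) \<and>
   (\<forall>x. \<not> p\<lless>x \<longrightarrow> s x = undefined) \<and> (\<forall>x y. p\<lless>x \<and> p\<lless>y \<and> x\<le>y \<longrightarrow> F x y (s x) = s y)"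
  by (simp add: upper_lim_def)

lemma U1:
  fixes V :: "(real^'n) set" and k :: "'k ring"
  assumes k: "cring k" and up: "up_set V" and pV: "p \<in> V"
  shows "USC k V p"
proof -
  let ?M = "indicator_module k V" and ?F = "indicator_map k V"
  let ?c = "\<lambda>m. \<lambda>x. if p \<lless> x then m else undefined"
  have inV: "x \<in> V" if "p \<lless> x" for x using up pV wb_le[OF that] by (auto simp: up_set_def)
  have can: "upper_canon ?F p m = ?c m" for m
    using inV pV by (auto simp: upper_canon_def map_ind fun_eq_iff)
  have inj: "inj_on (upper_canon ?F p) (carrier (?M p))"
  proof (rule inj_onI)
    fix a b assume "upper_canon ?F p a = upper_canon ?F p b"
    hence "?c a (up1 p) = ?c b (up1 p)" unfolding can by (rule fun_cong)
    moreover have "p \<lless> up1 p" by (rule up1)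
    ultimately show "a = b" by (metis (full_types))
  qed
  have img: "upper_canon ?F p ` carrier (?M p) = upper_lim ?M ?F p"
  proof
    show "upper_canon ?F p ` carrier (?M p) \<subseteq> upper_lim ?M ?F p"
    proof
      fix s assume "s \<in> upper_canon ?F p ` carrier (?M p)"
      then obtain m where "m \<in> carrier k" "s = ?c m" using pV by (auto simp: can car_ind)
      thus "s \<in> upper_lim ?M ?F p" using inV by (auto simp: mem_upper_lim car_ind map_ind)
    qed
    show "upper_lim ?M ?F p \<subseteq> upper_canon ?F p ` carrier (?M p)"
    proof
      fix s assume s: "s \<in> upper_lim ?M ?F p"
      define m where "m = s (up1 p)"
      have u: "p \<lless> up1 p" by (rule up1)
      have "\<forall>x. p\<lless>x \<longrightarrow> s x \<in> carrier (?M x)" using s by (simp add: mem_upper_lim)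
      hence "s (up1 p) \<in> carrier (?M (up1 p))" using u by blast
      hence m: "m \<in> carrier k" using inV[OF u] by (simp add: car_ind m_def)
      have "s x = ?c m x" for x
      proof (cases "p \<lless> x")
        case True
        let ?z = "vmax x (up1 p)"
        have z: "p \<lless> ?z" using vmax(1)[OF True up1] .
        have "?F x ?z (s x) = s ?z" "?F (up1 p) ?z (s (up1 p)) = s ?z"
          using s True z up1 vmax(2,3) unfolding mem_upper_lim by blast+
        hence "s x = s (up1 p)" using inV[OF True] inV[OF z] inV[OF u] by (simp add: map_ind)
        thus ?thesis using True m_def by simp
      next
        case False thus ?thesis using s by (simp add: mem_upper_lim)
      qed
      hence "s = upper_canon ?F p m" by (simp add: can fun_eq_iff)
      thus "s \<in> upper_canon ?F p ` carrier (?M p)" using m pV by (simp add: car_ind)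
    qed
  qed
  show ?thesis using inj img by (simp add: bij_betw_def)
qed

lemma U2:
  fixes V :: "(real^'n) set" and k :: "'k ring"
  assumes k: "cring k" and up: "up_set V" and pV: "p \<notin> V" and x1: "p \<lless> x1" "x1 \<notin> V"
  shows "USC k V p"
proof -
  let ?M = "indicator_module k V" and ?F = "indicator_map k V"
  let ?c = "\<lambda>x. if p \<lless> x then \<zero>\<^bsub>k\<^esub> else undefined"
  have can: "upper_canon ?F p \<zero>\<^bsub>k\<^esub> = ?c"
    using pV by (auto simp: upper_canon_def map_ind fun_eq_iff)
  have "upper_lim ?M ?F p = {?c}"
  proof (intro Set.set_eqI iffI)
    fix s assume s: "s \<in> upper_lim ?M ?F p"
    have "s x = ?c x" for x
    proof (cases "p \<lless> x")
      case True
      let ?z = "vmin x x1"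
      have z: "p \<lless> ?z" using vmin(1)[OF True x1(1)] .
      have "?z \<notin> V" using up x1(2) vmin(3) by (auto simp: up_set_def)
      moreover have "?F ?z x (s ?z) = s x"
        using s True z vmin(2) unfolding mem_upper_lim by blast
      ultimately show ?thesis using True by (simp add: map_ind)
    next
      case False thus ?thesis using s by (simp add: mem_upper_lim)
    qed
    thus "s \<in> {?c}" by (auto simp: fun_eq_iff)
  next
    fix s assume "s \<in> {?c}"
    thus "s \<in> upper_lim ?M ?F p" using cring_simps[OF k] by (auto simp: mem_upper_lim car_ind map_ind)
  qed
  thus ?thesis using pV can by (simp add: car_ind bij_betw_def)
qed

lemma U3:
  fixes V :: "(real^'n) set" and k :: "'k ring"
  assumes k: "cring k" "\<one>\<^bsub>k\<^esub> \<noteq> \<zero>\<^bsub>k\<^esub>" and pV: "p \<notin> V" and all: "\<forall>x. p \<lless> x \<longrightarrow> x \<in> V"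
  shows "\<not> USC k V p"
proof
  assume b: "USC k V p"
  let ?M = "indicator_module k V" and ?F = "indicator_map k V"
  let ?c = "\<lambda>m. \<lambda>x. if p \<lless> x then m else undefined"
  have "?c m \<in> upper_lim ?M ?F p" if "m \<in> carrier k" for m
    using all that by (auto simp: mem_upper_lim car_ind map_ind)
  hence "?c \<one>\<^bsub>k\<^esub> \<in> upper_canon ?F p ` carrier (?M p)" "?c \<zero>\<^bsub>k\<^esub> \<in> upper_canon ?F p ` carrier (?M p)"
    using b cring_simps[OF k(1)] by (auto simp: bij_betw_def)
  hence "?c \<one>\<^bsub>k\<^esub> = ?c \<zero>\<^bsub>k\<^esub>" using pV by (auto simp: car_ind)
  hence "?c \<one>\<^bsub>k\<^esub> (up1 p) = ?c \<zero>\<^bsub>k\<^esub> (up1 p)" by (rule fun_cong)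
  moreover have "p \<lless> up1 p" by (rule up1)
  ultimately show False using k(2) by (metis (full_types))
qed

lemma E1:
  fixes E :: "(real^'n) set" and k :: "'k ring"
  assumes k: "cring k" and down: "down_set E" and pE: "p \<in> E" and x0: "p \<lless> x0" "x0 \<in> E"
  shows "USC k E p"
proof -
  let ?M = "indicator_module k E" and ?F = "indicator_map k E"
  let ?c = "\<lambda>m. \<lambda>x. if p \<lless> x then (if x \<in> E then m else \<zero>\<^bsub>k\<^esub>) else undefined"
  have can: "upper_canon ?F p m = ?c m" for m
    using pE by (auto simp: upper_canon_def map_ind fun_eq_iff)
  have inj: "inj_on (upper_canon ?F p) (carrier (?M p))"
  proof (rule inj_onI)
    fix a b assume "upper_canon ?F p a = upper_canon ?F p b"
    hence "?c a x0 = ?c b x0" unfolding can by (rule fun_cong)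
    thus "a = b" using x0 by simp
  qed
  have img: "upper_canon ?F p ` carrier (?M p) = upper_lim ?M ?F p"
  proof
    show "upper_canon ?F p ` carrier (?M p) \<subseteq> upper_lim ?M ?F p"
    proof
      fix s assume "s \<in> upper_canon ?F p ` carrier (?M p)"
      then obtain m where m: "m \<in> carrier k" "s = ?c m" using pE by (auto simp: can car_ind)
      have "?F x y (s x) = s y" if "p \<lless> x" "p \<lless> y" "x \<le> y" for x y
      proof (cases "y \<in> E")
        case True
        hence "x \<in> E" using down that(3) by (auto simp: down_set_def)
        thus ?thesis using True that m by (simp add: map_ind)
      next
        case False thus ?thesis using that m by (simp add: map_ind)
      qed
      thus "s \<in> upper_lim ?M ?F p" using m cring_simps[OF k] by (auto simp: mem_upper_lim car_ind)
    qed
    show "upper_lim ?M ?F p \<subseteq> upper_canon ?F p ` carrier (?M p)"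
    proof
      fix s assume s: "s \<in> upper_lim ?M ?F p"
      define m where "m = s x0"
      have "\<forall>x. p\<lless>x \<longrightarrow> s x \<in> carrier (?M x)" using s by (simp add: mem_upper_lim)
      hence car: "s x \<in> carrier (?M x)" if "p \<lless> x" for x using that by blast
      hence m: "m \<in> carrier k" using x0 car[OF x0(1)] by (simp add: car_ind m_def)
      have "s x = ?c m x" for x
      proof (cases "p \<lless> x")
        case True
        show ?thesis
        proof (cases "x \<in> E")
          case xE: True
          let ?z = "vmin x x0"
          have z: "p \<lless> ?z" using vmin(1)[OF True x0(1)] .
          have zE: "?z \<in> E" using down xE vmin(2) by (auto simp: down_set_def)
          have "?F ?z x (s ?z) = s x" "?F ?z x0 (s ?z) = s x0"
            using s True z x0(1) vmin(2,3) unfolding mem_upper_lim by blast+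
          hence "s x = s x0" using xE zE x0(2) by (simp add: map_ind)
          thus ?thesis using True xE m_def by simp
        next
          case False thus ?thesis using car[OF True] True by (simp add: car_ind)
        qed
      next
        case False thus ?thesis using s by (simp add: mem_upper_lim)
      qed
      hence "s = upper_canon ?F p m" by (simp add: can fun_eq_iff)
      thus "s \<in> upper_canon ?F p ` carrier (?M p)" using m pE by (simp add: car_ind)
    qed
  qed
  show ?thesis using inj img by (simp add: bij_betw_def)
qed

lemma E2:
  fixes E :: "(real^'n) set" and k :: "'k ring"
  assumes k: "cring k" "\<one>\<^bsub>k\<^esub> \<noteq> \<zero>\<^bsub>k\<^esub>" and pE: "p \<in> E" and none: "\<forall>x. p \<lless> x \<longrightarrow> x \<notin> E"
  shows "\<not> USC k E p"
proof
  assume b: "USC k E p"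
  let ?F = "indicator_map k E"
  have "upper_canon ?F p \<one>\<^bsub>k\<^esub> = upper_canon ?F p \<zero>\<^bsub>k\<^esub>"
    using none by (auto simp: upper_canon_def map_ind fun_eq_iff)
  moreover have "inj_on (upper_canon ?F p) (carrier k)" using b pE by (simp add: bij_betw_def car_ind)
  ultimately show False using cring_simps[OF k(1)] k(2) by (meson inj_onD)
qed

lemma E3:
  fixes E :: "(real^'n) set" and k :: "'k ring"
  assumes k: "cring k" and down: "down_set E" and pE: "p \<notin> E"
  shows "USC k E p"
proof -
  let ?M = "indicator_module k E" and ?F = "indicator_map k E"
  let ?c = "\<lambda>x. if p \<lless> x then \<zero>\<^bsub>k\<^esub> else undefined"
  have out: "x \<notin> E" if "p \<lless> x" for x using down pE wb_le[OF that] by (auto simp: down_set_def)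
  have can: "upper_canon ?F p \<zero>\<^bsub>k\<^esub> = ?c"
    using pE by (auto simp: upper_canon_def map_ind fun_eq_iff)
  have "upper_lim ?M ?F p = {?c}"
  proof (intro Set.set_eqI iffI)
    fix s assume s: "s \<in> upper_lim ?M ?F p"
    have "\<forall>x. p\<lless>x \<longrightarrow> s x \<in> carrier (?M x)" using s by (simp add: mem_upper_lim)
    hence car: "s x \<in> carrier (?M x)" if "p \<lless> x" for x using that by blast
    have "s x = ?c x" for x
    proof (cases "p \<lless> x")
      case True thus ?thesis using car[OF True] out[OF True] by (simp add: car_ind)
    next
      case False thus ?thesis using s by (simp add: mem_upper_lim)
    qed
    thus "s \<in> {?c}" by (auto simp: fun_eq_iff)
  next
    fix s assume "s \<in> {?c}"
    thus "s \<in> upper_lim ?M ?F p" using cring_simps[OF k] by (auto simp: mem_upper_lim car_ind map_ind)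
  qed
  thus ?thesis using pE can by (simp add: car_ind bij_betw_def)
qed

lemma upper_up:
  fixes V :: "(real^'n) set" and k :: "'k ring"
  assumes k: "cring k" "\<one>\<^bsub>k\<^esub> \<noteq> \<zero>\<^bsub>k\<^esub>" and up: "up_set V"
  shows "upper_semicontinuous (indicator_module k V) (indicator_map k V) \<longleftrightarrow> closed V"
proof -
  have down: "down_set (-V)" using up by (auto simp: up_set_def down_set_def)
  have "USC k V p \<longleftrightarrow> (p \<in> -V \<longrightarrow> (\<exists>x. p \<lless> x \<and> x \<in> -V))" for p
  proof (cases "p \<in> V")
    case True thus ?thesis using U1[OF k(1) up] by blast
  next
    case False
    show ?thesis
    proof (cases "\<exists>x. p \<lless> x \<and> x \<in> -V")
      case True thus ?thesis using U2[OF k(1) up False] by blast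
    next
      case F2: False
      hence "\<forall>x. p \<lless> x \<longrightarrow> x \<in> V" by blast
      thus ?thesis using U3[OF k False] F2 False by blast
    qed
  qed
  thus ?thesis unfolding upper_semicontinuous_def closed_def open_char[OF down] by blast
qed

lemma upper_down:
  fixes E :: "(real^'n) set" and k :: "'k ring"
  assumes k: "cring k" "\<one>\<^bsub>k\<^esub> \<noteq> \<zero>\<^bsub>k\<^esub>" and down: "down_set E"
  shows "upper_semicontinuous (indicator_module k E) (indicator_map k E) \<longleftrightarrow> open E"
proof -
  have "USC k E p \<longleftrightarrow> (p \<in> E \<longrightarrow> (\<exists>x. p \<lless> x \<and> x \<in> E))" for p
  proof (cases "p \<in> E")
    case False thus ?thesis using E3[OF k(1) down] by blast
  next
    case True
    show ?thesis
    proof (cases "\<exists>x. p \<lless> x \<and> x \<in> E")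
      case T2: True thus ?thesis using E1[OF k(1) down True] by blast
    next
      case F2: False
      hence "\<forall>x. p \<lless> x \<longrightarrow> x \<notin> E" by blast
      thus ?thesis using E2[OF k True] F2 True by blast
    qed
  qed
  thus ?thesis unfolding upper_semicontinuous_def open_char[OF down] by blast
qed


theorem mainTheorem9:
  fixes k :: "'k ring" and U D :: "'a::order set"
  assumes "cring k" and "\<one>\<^bsub>k\<^esub> \<noteq> \<zero>\<^bsub>k\<^esub>"
    and "continuous_poset TYPE('a)"
    and "up_set U" and "down_set D"
  shows "(lower_semicontinuous (indicator_module k U) (indicator_map k U) \<longleftrightarrow> scott_open U)
    \<and> (lower_semicontinuous (indicator_module k D) (indicator_map k D) \<longleftrightarrow> scott_closed D)
    \<and> (\<forall>V :: (real ^ 'n) set. up_set V \<longrightarrow>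
         (upper_semicontinuous (indicator_module k V) (indicator_map k V) \<longleftrightarrow> closed V))
    \<and> (\<forall>E :: (real ^ 'n) set. down_set E \<longrightarrow>
         (upper_semicontinuous (indicator_module k E) (indicator_map k E) \<longleftrightarrow> open E))"
  using lower_up[OF assms(1,2,3,4)] lower_down[OF assms(1,2,3,5)]
    upper_up[OF assms(1,2)] upper_down[OF assms(1,2)] by blast

end
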